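(* Let $\beta$ be an ordinal and $Q\subseteq I\times\beta$. Then $Q\in\mathcal{B}_V\otimes\mathcal{P}(\beta)$ if and only if every section $Q_\alpha$ ($\alpha<\beta$) lies in some $\boldsymbol{\Sigma}^V_\xi(I)$ and $\mathrm{comp}(Q)<\omega_1$.
   Context: $I=(0,1)$, $V\subseteq I$ a fixed Lebesgue nonmeasurable set, $\mathcal{B}_V=\sigma(\mathcal{B}(I)\cup\{V\})$, and $\mathcal{B}_V\otimes\mathcal{P}(\beta)$ is the product $\sigma$-algebra on $I\times\beta$. Let $C_0=V$, $C_1=I\setminus V$, and let $\{C_n\}_{n\geq2}$ enumerate the open intervals with rational endpoints contained in $I$. Define $\boldsymbol{\Sigma}^V_1(I)$ as the family of unions of subfamilies of $\{C_n\}_{n\in\omega}$; $\boldsymbol{\Pi}^V_\xi(I)$ as the complements (in $I$) of members of $\boldsymbol{\Sigma}^V_\xi(I)$; and for $\xi>1$, $\boldsymbol{\Sigma}^V_\xi(I)=\{\bigcup_{n\in\omega}A^{(n)}: A^{(n)}\in\boldsymbol{\Pi}^V_{\xi_n}(I),\ \xi_n<\xi\}$. For $Q\subseteq I\times\beta$ and $\alpha<\beta$, the section is $Q_\alpha=\{r:(r,\alpha)\in Q\}$; $\mathrm{comp}(Q,\alpha)=\min\{\xi\geq1:Q_\alpha\in\boldsymbol{\Sigma}^V_\xi(I)\}$ and $\mathrm{comp}(Q)=\sup_{\alpha<\beta}\mathrm{comp}(Q,\alpha)$. *)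

theory Defs
  imports "HOL-Analysis.Analysis"
begin

definition unitI :: "real set" where
  "unitI = {0<..<1}"

definition BV :: "real set \<Rightarrow> real measure" where
  "BV V = sigma unitI ({B \<inter> unitI | B. B \<in> sets borel} \<union> {V})"

definition Cfam :: "real set \<Rightarrow> real set set" where
  "Cfam V = {V, unitI - V} \<union>
     {{a<..<b} | a b. a \<in> \<rat> \<and> b \<in> \<rat> \<and> a < b \<and> {a<..<b} \<subseteq> unitI}"

text \<open>Countable ordinals xi \<ge> 1 are represented by well-orders r on subsets of nat with
  nonempty field; xi = 1 iff the field is a singleton; comparison by ordLess / ordLeq.
  SigV V r A means A \<in> Sigma^V_xi(I) where xi is the order type of r.\<close>
inductive SigV :: "real set \<Rightarrow> nat rel \<Rightarrow> real set \<Rightarrow> bool" for V where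
  base: "\<lbrakk>Well_order r; \<exists>x. Field r = {x}; F \<subseteq> Cfam V\<rbrakk> \<Longrightarrow> SigV V r (\<Union>F)"
| step: "\<lbrakk>Well_order r; \<not> (\<exists>x. Field r \<subseteq> {x});
          \<forall>n::nat. Well_order (rs n) \<and> Field (rs n) \<noteq> {} \<and> (rs n, r) \<in> (ordLess :: (nat rel \<times> nat rel) set) \<and>
               (\<exists>B. SigV V (rs n) B \<and> As n = unitI - B)\<rbrakk>
        \<Longrightarrow> SigV V r (\<Union>n::nat. As n)"

definition sect :: "(real \<times> 'b) set \<Rightarrow> 'b \<Rightarrow> real set" where
  "sect Q \<alpha> = {x. (x, \<alpha>) \<in> Q}"

definition in_some_SigV :: "real set \<Rightarrow> real set \<Rightarrow> bool" where
  "in_some_SigV V A \<longleftrightarrow> (\<exists>r. Well_order r \<and> Field r \<noteq> {} \<and> SigV V r A)"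

text \<open>comp(Q) < omega_1: there is a countable ordinal eta \<ge> 1 bounding comp(Q, alpha)
  for every alpha, i.e. every section lies in Sigma^V_xi for some 1 \<le> xi \<le> eta.\<close>
definition comp_lt_omega1 :: "real set \<Rightarrow> (real \<times> 'b) set \<Rightarrow> bool" where
  "comp_lt_omega1 V Q \<longleftrightarrow>
     (\<exists>\<eta>::nat rel. Well_order \<eta> \<and> Field \<eta> \<noteq> {} \<and>
        (\<forall>\<alpha>. \<exists>r. Well_order r \<and> Field r \<noteq> {} \<and> (r, \<eta>) \<in> (ordLeq :: (nat rel \<times> nat rel) set) \<and> SigV V r (sect Q \<alpha>)))"

end

theory Submission
  imports Defs "HOL-Library.Nat_Bijection"
begin


lemma incr_self:
  assumes wo: "Well_order r" and gF: "\<forall>a\<in>Field r. g a \<in> Field r"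
  and mono: "\<forall>a\<in>Field r. \<forall>b\<in>Field r. (a,b) \<in> r \<and> a \<noteq> b \<longrightarrow> (g a, g b) \<in> r \<and> g a \<noteq> g b"
  shows "\<forall>a\<in>Field r. (a, g a) \<in> r"
proof (rule ccontr)
  assume "\<not> ?thesis"
  then obtain a0 where a0: "a0 \<in> Field r" "(a0, g a0) \<notin> r" by blast
  have wf: "wf (r - Id)" using wo by (simp add: well_order_on_def)
  have tot: "total_on (Field r) r" and anti: "antisym r"
    using wo by (auto simp: order_on_defs)
  let ?S = "{a \<in> Field r. (a, g a) \<notin> r}"
  obtain a where a: "a \<in> ?S" and amin: "\<And>y. (y, a) \<in> r - Id \<Longrightarrow> y \<notin> ?S"
  proof -
    have "a0 \<in> ?S" using a0 by blast
    from wf_eq_minimal[THEN iffD1, rule_format, OF wf this] show ?thesis using that by blast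
  qed
  have aF: "a \<in> Field r" and gaF: "g a \<in> Field r" using a gF by auto
  have ne: "g a \<noteq> a" using a wo by (auto simp: order_on_defs refl_on_def)
  have "(g a, a) \<in> r" using tot a ne gaF unfolding total_on_def by blast
  then have 1: "(g (g a), g a) \<in> r \<and> g (g a) \<noteq> g a" using mono aF gaF ne by blast
  have "g a \<notin> ?S" using amin \<open>(g a, a) \<in> r\<close> ne by blast
  then have "(g a, g (g a)) \<in> r" using gaF by blast
  with 1 anti show False unfolding antisym_def by blast
qed

lemma restr_le:
  assumes wo: "Well_order r" and B: "B \<subseteq> Field r"
  shows "(Restr r B, r) \<in> ordLeq"
proof -
  have woB: "Well_order (Restr r B)" using wo Well_order_Restr by blast
  have FB: "Field (Restr r B) = B" using wo B by (simp add: Refl_Field_Restr2 order_on_defs)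
  { assume "(r, Restr r B) \<in> ordLess"
    then obtain g where emb: "embed r (Restr r B) g" and nb: "\<not> bij_betw g (Field r) B"
      using FB unfolding ordLess_def embedS_def by auto
    have cmp: "compat r (Restr r B) g" using emb embed_compat by blast
    have inj: "inj_on g (Field r)" using emb embed_inj_on wo by blast
    have ofl: "wo_rel.ofilter (Restr r B) (g ` Field r)" using embed_Field_ofilter wo woB emb by blast
    have gB: "g ` Field r \<subseteq> B" using ofl FB unfolding wo_rel.ofilter_def[OF woB[unfolded wo_rel_def[symmetric]]] by blast
    have "\<forall>a\<in>Field r. (a, g a) \<in> r"
    proof (rule incr_self[OF wo])
      show "\<forall>a\<in>Field r. g a \<in> Field r" using gB B by blast
      show "\<forall>a\<in>Field r. \<forall>b\<in>Field r. (a, b) \<in> r \<and> a \<noteq> b \<longrightarrow> (g a, g b) \<in> r \<and> g a \<noteq> g b"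
        using cmp inj unfolding compat_def inj_on_def by blast
    qed
    have "B \<subseteq> g ` Field r"
    proof
      fix b assume b: "b \<in> B"
      then have "(b, g b) \<in> r" using \<open>\<forall>a\<in>Field r. (a, g a) \<in> r\<close> B by blast
      moreover have "g b \<in> B" using gB b B by blast
      ultimately have "(b, g b) \<in> Restr r B" using b by blast
      then have "b \<in> under (Restr r B) (g b)" by (simp add: under_def)
      moreover have "g b \<in> g ` Field r" using b B by blast
      ultimately show "b \<in> g ` Field r" using ofl
        unfolding wo_rel.ofilter_def[OF woB[unfolded wo_rel_def[symmetric]]] by blast
    qed
    then have "bij_betw g (Field r) B" using inj gB by (auto simp: bij_betw_def)
    with nb have False by blast }
  then show ?thesis using ordLess_or_ordLeq[OF wo woB] by blast
qed

lemma mono_le: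
  assumes wo: "Well_order r" and wo': "Well_order r'" and fF: "f ` Field r \<subseteq> Field r'"
    and inj: "inj_on f (Field r)" and cmp: "compat r r' f"
  shows "(r, r') \<in> ordLeq"
proof -
  let ?A = "f ` Field r"
  have woA: "Well_order (Restr r' ?A)" using wo' Well_order_Restr by blast
  have FA: "Field (Restr r' ?A) = ?A" using wo' fF by (simp add: Refl_Field_Restr2 order_on_defs)
  have "compat r (Restr r' ?A) f" using cmp unfolding compat_def by (auto intro: FieldI1 FieldI2)
  then have "iso r (Restr r' ?A) f" using iso_iff3[OF wo woA] FA inj by (simp add: bij_betw_def)
  then have "(r, Restr r' ?A) \<in> ordIso" using wo woA unfolding ordIso_def by blast
  then show ?thesis using restr_le[OF wo' fF] ordIso_ordLeq_trans by blast
qed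

definition blkD :: "(nat \<Rightarrow> nat rel) \<Rightarrow> (nat \<times> nat) set" where
  "blkD h = {(k,0)| k. True} \<union> {(k, Suc x) | k x. x \<in> Field (h k)}"

definition sumR :: "(nat \<Rightarrow> nat rel) \<Rightarrow> (nat \<times> nat) rel" where
  "sumR h = {(p,q). p \<in> blkD h \<and> q \<in> blkD h \<and> (fst p < fst q \<or> (fst p = fst q \<and>
      (snd q = 0 \<or> (snd p \<noteq> 0 \<and> snd q \<noteq> 0 \<and> (snd p - 1, snd q - 1) \<in> h (fst p)))))}"

lemma sumR_refl:
  assumes wo: "\<forall>k. Well_order (h k)" and p: "p \<in> blkD h"
  shows "(p,p) \<in> sumR h"
proof (cases "snd p = 0")
  case True then show ?thesis using p unfolding sumR_def by auto
next
  case False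
  then obtain k x where "p = (k, Suc x)" "x \<in> Field (h k)" using p unfolding blkD_def by auto
  moreover have "(x,x) \<in> h k" using wo \<open>x \<in> Field (h k)\<close> by (auto simp: order_on_defs refl_on_def)
  ultimately show ?thesis using p unfolding sumR_def by auto
qed

lemma sumR_Field:
  assumes wo: "\<forall>k. Well_order (h k)"
  shows "Field (sumR h) = blkD h"
proof
  show "Field (sumR h) \<subseteq> blkD h" unfolding sumR_def Field_def by auto
  show "blkD h \<subseteq> Field (sumR h)" using sumR_refl[OF wo] by (auto intro: FieldI1)
qed

lemma sumR_trans:
  assumes wo: "\<forall>k. Well_order (h k)"
  shows "trans (sumR h)"
proof -
  have tr: "\<And>k. trans (h k)" using wo by (auto simp: order_on_defs)
  show ?thesis unfolding trans_def
  proof (intro allI impI)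
    fix p q r assume pq: "(p,q) \<in> sumR h" and qr: "(q,r) \<in> sumR h"
    show "(p,r) \<in> sumR h"
    proof (cases "fst p < fst r")
      case True then show ?thesis using pq qr unfolding sumR_def by auto
    next
      case False
      then have e: "fst p = fst q" "fst q = fst r" using pq qr unfolding sumR_def by auto
      show ?thesis
      proof (cases "snd r = 0")
        case True then show ?thesis using pq qr e unfolding sumR_def by auto
      next
        case False
        then have "snd q \<noteq> 0" "(snd q - 1, snd r - 1) \<in> h (fst q)" using qr e unfolding sumR_def by auto
        then have "snd p \<noteq> 0" "(snd p - 1, snd q - 1) \<in> h (fst p)" using pq e unfolding sumR_def by auto
        then have "(snd p - 1, snd r - 1) \<in> h (fst p)"
          using tr[of "fst p"] e \<open>(snd q - 1, snd r - 1) \<in> h (fst q)\<close> unfolding trans_def by metis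
        then show ?thesis using pq qr e False \<open>snd p \<noteq> 0\<close> unfolding sumR_def by auto
      qed
    qed
  qed
qed

lemma sumR_antisym:
  assumes wo: "\<forall>k. Well_order (h k)"
  shows "antisym (sumR h)"
proof -
  have an: "\<And>k. antisym (h k)" using wo by (auto simp: order_on_defs)
  show ?thesis unfolding antisym_def
  proof (intro allI impI)
    fix p q assume a1: "(p,q) \<in> sumR h" and a2: "(q,p) \<in> sumR h"
    have a: "(p,q) \<in> sumR h \<and> (q,p) \<in> sumR h" using a1 a2 by blast
    then have e: "fst p = fst q" unfolding sumR_def by auto
    show "p = q"
    proof (cases "snd p = 0 \<or> snd q = 0")
      case True then show ?thesis using a e unfolding sumR_def by (auto simp: prod_eq_iff)
    next
      case False
      then have "(snd p - 1, snd q - 1) \<in> h (fst p)" "(snd q - 1, snd p - 1) \<in> h (fst p)"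
        using a e unfolding sumR_def by auto
      then have "snd p - 1 = snd q - 1" using an[of "fst p"] unfolding antisym_def by blast
      then have "snd p = snd q" using False by arith
      then show ?thesis using e by (simp add: prod_eq_iff)
    qed
  qed
qed

lemma sumR_total:
  assumes wo: "\<forall>k. Well_order (h k)"
  shows "total_on (blkD h) (sumR h)"
proof -
  have to: "\<And>k. total_on (Field (h k)) (h k)" using wo by (auto simp: order_on_defs)
  show ?thesis unfolding total_on_def
  proof (intro ballI impI)
    fix p q assume p: "p \<in> blkD h" and q: "q \<in> blkD h" and ne: "p \<noteq> q"
    show "(p, q) \<in> sumR h \<or> (q, p) \<in> sumR h"
    proof (cases "fst p = fst q")
      case False then show ?thesis using p q unfolding sumR_def by auto
    next
      case e: True
      show ?thesis
      proof (cases "snd p = 0 \<or> snd q = 0")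
        case True then show ?thesis using p q e unfolding sumR_def by auto
      next
        case False
        obtain x where x: "snd p = Suc x" "x \<in> Field (h (fst p))" using p False unfolding blkD_def by auto
        obtain y where y: "snd q = Suc y" "y \<in> Field (h (fst p))" using q False e unfolding blkD_def by auto
        have "x \<noteq> y" using x y e ne by (auto simp: prod_eq_iff)
        then have "(x,y) \<in> h (fst p) \<or> (y,x) \<in> h (fst p)" using to[of "fst p"] x y unfolding total_on_def by blast
        then show ?thesis using p q e x y unfolding sumR_def by auto
      qed
    qed
  qed
qed

lemma sumR_wf:
  assumes wo: "\<forall>k. Well_order (h k)"
  shows "wf (sumR h - Id)"
proof -
  have wfk: "\<And>k. wf (h k - Id)" using wo by (auto simp: order_on_defs)
  show ?thesis unfolding wf_eq_minimal
  proof (intro allI impI)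
    fix Q :: "(nat \<times> nat) set" and p0 assume p0: "p0 \<in> Q"
    show "\<exists>z\<in>Q. \<forall>y. (y, z) \<in> sumR h - Id \<longrightarrow> y \<notin> Q"
    proof (cases "Q \<subseteq> blkD h")
      case False
      then obtain z where "z \<in> Q" "z \<notin> blkD h" by blast
      then show ?thesis unfolding sumR_def by auto
    next
      case sub: True
      define k0 where "k0 = (LEAST k. \<exists>x. (k,x) \<in> Q)"
      have "\<exists>k x. (k,x) \<in> Q" using p0 by (metis prod.collapse)
      from LeastI_ex[OF this] have "\<exists>x. (k0,x) \<in> Q" unfolding k0_def .
      have kmin: "\<And>k x. (k,x) \<in> Q \<Longrightarrow> k0 \<le> k" unfolding k0_def by (auto intro: Least_le)
      show ?thesis
      proof (cases "\<exists>x. (k0, Suc x) \<in> Q")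
        case True
        then obtain x0 where x0: "x0 \<in> {x. (k0, Suc x) \<in> Q}" by blast
        obtain x where x: "x \<in> {x. (k0, Suc x) \<in> Q}" and xmin: "\<And>y. (y, x) \<in> h k0 - Id \<Longrightarrow> y \<notin> {x. (k0, Suc x) \<in> Q}"
          using wf_eq_minimal[THEN iffD1, rule_format, OF wfk x0] by blast
        show ?thesis
        proof (rule bexI[of _ "(k0, Suc x)"])
          show "(k0, Suc x) \<in> Q" using x by simp
          show "\<forall>y. (y, (k0, Suc x)) \<in> sumR h - Id \<longrightarrow> y \<notin> Q"
          proof (intro allI impI notI)
            fix y assume y: "(y, (k0, Suc x)) \<in> sumR h - Id" and yQ: "y \<in> Q"
            obtain k z where yy: "y = (k,z)" by (cases y)
            have "k0 \<le> k" using kmin yQ yy by blast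
            then have "k = k0" "z \<noteq> 0" "(z - 1, x) \<in> h k0" using y yy unfolding sumR_def by auto
            moreover have "z - 1 \<noteq> x" using y yy \<open>k = k0\<close> \<open>z \<noteq> 0\<close> by auto
            ultimately have "z - 1 \<notin> {x. (k0, Suc x) \<in> Q}" using xmin by blast
            then show False using yQ yy \<open>k = k0\<close> \<open>z \<noteq> 0\<close> by simp
          qed
        qed
      next
        case False
        then have "(k0, 0) \<in> Q" using \<open>\<exists>x. (k0,x) \<in> Q\<close> by (metis not0_implies_Suc)
        show ?thesis
        proof (rule bexI[OF _ \<open>(k0, 0) \<in> Q\<close>])
          show "\<forall>y. (y, (k0, 0)) \<in> sumR h - Id \<longrightarrow> y \<notin> Q"
          proof (intro allI impI notI)
            fix y assume y: "(y, (k0, 0)) \<in> sumR h - Id" and yQ: "y \<in> Q"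
            obtain k z where yy: "y = (k,z)" by (cases y)
            have "k0 \<le> k" using kmin yQ yy by blast
            then have "k = k0" "z \<noteq> 0" using y yy unfolding sumR_def by auto
            then show False using False yQ yy by (metis not0_implies_Suc)
          qed
        qed
      qed
    qed
  qed
qed

lemma sumR_Well_order:
  assumes wo: "\<forall>k. Well_order (h k)"
  shows "Well_order (sumR h)"
  unfolding sumR_Field[OF wo] order_on_defs
  using sumR_refl[OF wo] sumR_trans[OF wo] sumR_antisym[OF wo] sumR_total[OF wo] sumR_wf[OF wo]
    sumR_Field[OF wo]
  by (auto simp: refl_on_def Field_def)

lemma bound_exists:
  fixes h :: "nat \<Rightarrow> nat rel"
  assumes wo: "\<forall>k. Well_order (h k)"
  shows "\<exists>\<eta>::nat rel. Well_order \<eta> \<and> \<not> (\<exists>x. Field \<eta> \<subseteq> {x}) \<and> (\<forall>k. (h k, \<eta>) \<in> ordLess)"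
proof -
  let ?R = "sumR h"
  have W: "Well_order ?R" using sumR_Well_order[OF wo] .
  have F: "Field ?R = blkD h" using sumR_Field[OF wo] .
  have inj: "inj_on prod_encode (Field ?R)" using inj_prod_encode by (rule inj_on_subset) (rule subset_UNIV)
  define \<eta> where "\<eta> = dir_image ?R prod_encode"
  have W\<eta>: "Well_order \<eta>" unfolding \<eta>_def using Well_order_dir_image[OF W inj] .
  have iso: "(?R, \<eta>) \<in> ordIso" unfolding \<eta>_def using dir_image_ordIso[OF W inj] .
  have "prod_encode (0,0) \<in> Field \<eta>" "prod_encode (1,0) \<in> Field \<eta>"
    unfolding \<eta>_def dir_image_Field F by (auto simp: blkD_def)
  moreover have "prod_encode (0,0) \<noteq> prod_encode (1::nat,0::nat)"
    by (metis prod_encode_inverse old.prod.inject zero_neq_one)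
  ultimately have ns: "\<not> (\<exists>x. Field \<eta> \<subseteq> {x})" by blast
  have lt: "(h k, ?R) \<in> ordLess" for k
  proof -
    let ?U = "underS ?R (k,0)"
    have FR: "Field ?R \<noteq> {}" using F by (auto simp: blkD_def)
    have less: "(Restr ?R ?U, ?R) \<in> ordLess" using underS_Restr_ordLess[OF W FR] by simp
    have WU: "Well_order (Restr ?R ?U)" using W Well_order_Restr by blast
    have UF: "?U \<subseteq> Field ?R" by (auto simp: underS_def intro: FieldI1)
    have FU: "Field (Restr ?R ?U) = ?U" using W UF by (simp add: Refl_Field_Restr2 order_on_defs)
    have mem: "(k, Suc x) \<in> ?U" if "x \<in> Field (h k)" for x
      using that unfolding underS_def sumR_def blkD_def by auto
    have "(h k, Restr ?R ?U) \<in> ordLeq"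
    proof (rule mono_le[where f = "\<lambda>x. (k, Suc x)"])
      show "Well_order (h k)" using wo by blast
      show "Well_order (Restr ?R ?U)" using WU .
      show "(\<lambda>x. (k, Suc x)) ` Field (h k) \<subseteq> Field (Restr ?R ?U)" using mem FU by blast
      show "inj_on (\<lambda>x. (k, Suc x)) (Field (h k))" by (simp add: inj_on_def)
      show "compat (h k) (Restr ?R ?U) (\<lambda>x. (k, Suc x))"
        unfolding compat_def
      proof (intro allI impI)
        fix a b assume ab: "(a,b) \<in> h k"
        then have "a \<in> Field (h k)" "b \<in> Field (h k)" by (auto intro: FieldI1 FieldI2)
        then show "((k, Suc a), (k, Suc b)) \<in> Restr ?R ?U"
          using ab mem unfolding sumR_def blkD_def by auto
      qed
    qed
    then show ?thesis using less ordLeq_ordLess_trans by blast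
  qed
  show ?thesis using W\<eta> ns lt iso ordLess_ordIso_trans by blast
qed



lemma SigV_sub:
  assumes V: "V \<subseteq> unitI" and "SigV V r A"
  shows "A \<subseteq> unitI"
  using assms(2)
proof (induction rule: SigV.induct)
  case (base r F)
  then show ?case using V unfolding Cfam_def by auto
next
  case (step r rs As)
  then show ?case by blast
qed

definition famB :: "real set \<Rightarrow> ('c \<Rightarrow> real set) \<Rightarrow> bool" where
  "famB V A \<longleftrightarrow> (\<exists>\<eta>::nat rel. Well_order \<eta> \<and> Field \<eta> \<noteq> {} \<and>
     (\<forall>\<alpha>. \<exists>r. Well_order r \<and> Field r \<noteq> {} \<and> (r, \<eta>) \<in> ordLeq \<and> SigV V r (A \<alpha>)))"

lemma bound3:
  fixes h :: "nat \<Rightarrow> nat rel"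
  assumes wo: "\<forall>k. Well_order (h k)"
  shows "\<exists>\<eta>::nat rel. Well_order \<eta> \<and> \<not> (\<exists>x. Field \<eta> \<subseteq> {x}) \<and> Field \<eta> \<noteq> {} \<and> (\<forall>k. (h k, \<eta>) \<in> ordLess)"
proof -
  obtain \<eta> :: "nat rel" where "Well_order \<eta>" "\<not> (\<exists>x. Field \<eta> \<subseteq> {x})" "\<forall>k. (h k, \<eta>) \<in> ordLess"
    using bound_exists[OF wo] by blast
  moreover have "Field \<eta> \<noteq> {}" using calculation(2) by blast
  ultimately show ?thesis by blast
qed

lemma famB_compl:
  assumes V: "V \<subseteq> unitI" and A: "famB V A"
  shows "famB V (\<lambda>\<alpha>. unitI - A \<alpha>)"
proof -
  obtain \<eta> :: "nat rel" where \<eta>: "Well_order \<eta>" "Field \<eta> \<noteq> {}"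
    and h: "\<forall>\<alpha>. \<exists>r. Well_order r \<and> Field r \<noteq> {} \<and> (r, \<eta>) \<in> ordLeq \<and> SigV V r (A \<alpha>)"
    using A unfolding famB_def by blast
  have "\<forall>k::nat. Well_order ((\<lambda>_. \<eta>) k)" using \<eta> by simp
  from bound3[OF this] obtain \<eta>' :: "nat rel" where \<eta>': "Well_order \<eta>'" "\<not> (\<exists>x. Field \<eta>' \<subseteq> {x})" "Field \<eta>' \<noteq> {}" "(\<eta>, \<eta>') \<in> ordLess"
    by auto
  have "SigV V \<eta>' (unitI - A \<alpha>)" for \<alpha>
  proof -
    obtain r where r: "Well_order r" "Field r \<noteq> {}" "(r, \<eta>) \<in> ordLeq" "SigV V r (A \<alpha>)" using h by blast
    have "(r, \<eta>') \<in> ordLess" using r(3) \<eta>'(4) ordLeq_ordLess_trans by blast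
    then have "SigV V \<eta>' (\<Union>n::nat. unitI - A \<alpha>)"
      by (intro SigV.step[where rs = "\<lambda>_. r"]) (use \<eta>' r in auto)
    then show ?thesis by simp
  qed
  then show ?thesis unfolding famB_def using \<eta>' ordLeq_reflexive by blast
qed

lemma famB_union:
  fixes A :: "nat \<Rightarrow> 'c \<Rightarrow> real set"
  assumes V: "V \<subseteq> unitI" and A: "\<And>k. famB V (A k)"
  shows "famB V (\<lambda>\<alpha>. \<Union>k. A k \<alpha>)"
proof -
  have "\<forall>k. \<exists>\<eta>::nat rel. Well_order \<eta> \<and> Field \<eta> \<noteq> {} \<and>
     (\<forall>\<alpha>. \<exists>r. Well_order r \<and> Field r \<noteq> {} \<and> (r, \<eta>) \<in> ordLeq \<and> SigV V r (unitI - A k \<alpha>))"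
  proof
    fix k show "\<exists>\<eta>::nat rel. Well_order \<eta> \<and> Field \<eta> \<noteq> {} \<and>
     (\<forall>\<alpha>. \<exists>r. Well_order r \<and> Field r \<noteq> {} \<and> (r, \<eta>) \<in> ordLeq \<and> SigV V r (unitI - A k \<alpha>))"
      using famB_compl[OF V A[of k]] unfolding famB_def by blast
  qed
  then obtain h :: "nat \<Rightarrow> nat rel" where h: "\<And>k. Well_order (h k)"
    "\<And>k \<alpha>. \<exists>r. Well_order r \<and> Field r \<noteq> {} \<and> (r, h k) \<in> ordLeq \<and> SigV V r (unitI - A k \<alpha>)"
    by metis
  have "\<forall>k::nat. Well_order (h k)" using h(1) by simp
  from bound3[OF this] obtain \<eta> :: "nat rel" where \<eta>: "Well_order \<eta>" "\<not> (\<exists>x. Field \<eta> \<subseteq> {x})" "Field \<eta> \<noteq> {}" "\<forall>k. (h k, \<eta>) \<in> ordLess"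
    by auto
  have "SigV V \<eta> (\<Union>k. A k \<alpha>)" for \<alpha>
  proof -
    obtain rs where rs: "\<And>k. Well_order (rs k) \<and> Field (rs k) \<noteq> {} \<and> (rs k, h k) \<in> ordLeq \<and> SigV V (rs k) (unitI - A k \<alpha>)"
      using h(2)[of _ \<alpha>] by metis
    have sub: "A k \<alpha> \<subseteq> unitI" for k
    proof -
      obtain \<eta>k :: "nat rel" where "\<forall>\<alpha>. \<exists>r. Well_order r \<and> Field r \<noteq> {} \<and> (r, \<eta>k) \<in> ordLeq \<and> SigV V r (A k \<alpha>)"
        using A[of k] unfolding famB_def by blast
      then show ?thesis using SigV_sub[OF V] by blast
    qed
    show ?thesis
    proof (rule SigV.step[where rs = rs])
      show "Well_order \<eta>" "\<not> (\<exists>x. Field \<eta> \<subseteq> {x})" using \<eta> by auto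
      show "\<forall>n. Well_order (rs n) \<and> Field (rs n) \<noteq> {} \<and> (rs n, \<eta>) \<in> ordLess \<and>
             (\<exists>B. SigV V (rs n) B \<and> A n \<alpha> = unitI - B)"
      proof
        fix n
        have "(rs n, \<eta>) \<in> ordLess" using rs[of n] \<eta>(4)[rule_format, of n] ordLeq_ordLess_trans by blast
        moreover have "A n \<alpha> = unitI - (unitI - A n \<alpha>)" using sub[of n] by blast
        ultimately show "Well_order (rs n) \<and> Field (rs n) \<noteq> {} \<and> (rs n, \<eta>) \<in> ordLess \<and>
             (\<exists>B. SigV V (rs n) B \<and> A n \<alpha> = unitI - B)" using rs[of n] by blast
      qed
    qed
  qed
  then show ?thesis unfolding famB_def using \<eta> ordLeq_reflexive by blast
qed

lemma Well_order_single: "Well_order {(0::nat, 0::nat)}"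
  by (auto simp: order_on_defs refl_on_def total_on_def trans_def antisym_def Field_def)

lemma famB_base:
  assumes F: "\<And>\<alpha>. F \<alpha> \<subseteq> Cfam V"
  shows "famB V (\<lambda>\<alpha>. \<Union>(F \<alpha>))"
proof -
  have FS: "Field {(0::nat, 0::nat)} = {0}" by (auto simp: Field_def)
  have "SigV V {(0,0)} (\<Union>(F \<alpha>))" for \<alpha>
    by (rule SigV.base) (use Well_order_single FS F in auto)
  then show ?thesis unfolding famB_def using Well_order_single FS ordLeq_reflexive
    by (metis empty_not_insert)
qed

lemma famB_if:
  assumes A: "famB V A" and B: "famB V B"
  shows "famB V (\<lambda>\<alpha>. if \<alpha> \<in> S then A \<alpha> else B \<alpha>)"
proof -
  obtain \<eta>1 :: "nat rel" where \<eta>1: "Well_order \<eta>1"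
    and h1: "\<forall>\<alpha>. \<exists>r. Well_order r \<and> Field r \<noteq> {} \<and> (r, \<eta>1) \<in> ordLeq \<and> SigV V r (A \<alpha>)"
    using A unfolding famB_def by blast
  obtain \<eta>2 :: "nat rel" where \<eta>2: "Well_order \<eta>2"
    and h2: "\<forall>\<alpha>. \<exists>r. Well_order r \<and> Field r \<noteq> {} \<and> (r, \<eta>2) \<in> ordLeq \<and> SigV V r (B \<alpha>)"
    using B unfolding famB_def by blast
  have hw: "\<forall>k. Well_order ((\<lambda>k::nat. if k = 0 then \<eta>1 else \<eta>2) k)" using \<eta>1 \<eta>2 by auto
  obtain \<eta> :: "nat rel" where \<eta>: "Well_order \<eta>" "\<not> (\<exists>x. Field \<eta> \<subseteq> {x})" "Field \<eta> \<noteq> {}"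
     "\<forall>k. ((\<lambda>k::nat. if k = 0 then \<eta>1 else \<eta>2) k, \<eta>) \<in> ordLess"
    using bound3[OF hw] by auto
  have l1: "(\<eta>1, \<eta>) \<in> ordLeq" using \<eta>(4)[rule_format, of 0] ordLess_imp_ordLeq by simp
  have l2: "(\<eta>2, \<eta>) \<in> ordLeq" using \<eta>(4)[rule_format, of 1] ordLess_imp_ordLeq by simp
  show ?thesis unfolding famB_def
  proof (rule exI[of _ \<eta>], intro conjI allI)
    show "Well_order \<eta>" "Field \<eta> \<noteq> {}" using \<eta> by auto
    fix \<alpha>
    show "\<exists>r. Well_order r \<and> Field r \<noteq> {} \<and> (r, \<eta>) \<in> ordLeq \<and> SigV V r (if \<alpha> \<in> S then A \<alpha> else B \<alpha>)"
    proof (cases "\<alpha> \<in> S")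
      case True
      obtain r where "Well_order r" "Field r \<noteq> {}" "(r, \<eta>1) \<in> ordLeq" "SigV V r (A \<alpha>)" using h1 by blast
      moreover have "(r, \<eta>) \<in> ordLeq" using calculation(3) l1 ordLeq_transitive by blast
      ultimately show ?thesis using True by (intro exI[of _ r]) simp
    next
      case False
      obtain r where "Well_order r" "Field r \<noteq> {}" "(r, \<eta>2) \<in> ordLeq" "SigV V r (B \<alpha>)" using h2 by blast
      moreover have "(r, \<eta>) \<in> ordLeq" using calculation(3) l2 ordLeq_transitive by blast
      ultimately show ?thesis using False by (intro exI[of _ r]) simp
    qed
  qed
qed



lemma open_cover:
  assumes "open S"
  shows "S \<inter> unitI = \<Union>{C \<in> Cfam V. C \<subseteq> S \<inter> unitI}"
proof
  show "\<Union>{C \<in> Cfam V. C \<subseteq> S \<inter> unitI} \<subseteq> S \<inter> unitI" by blast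
  show "S \<inter> unitI \<subseteq> \<Union>{C \<in> Cfam V. C \<subseteq> S \<inter> unitI}"
  proof
    fix x assume x: "x \<in> S \<inter> unitI"
    have "open (S \<inter> unitI)" using assms unfolding unitI_def by auto
    then obtain e where e: "e > 0" "\<And>y. \<bar>y - x\<bar> < e \<Longrightarrow> y \<in> S \<inter> unitI"
      using x unfolding open_real by blast
    obtain a where a: "a \<in> \<rat>" "x - e < a" "a < x" using Rats_dense_in_real[of "x - e" x] e by auto
    obtain b where b: "b \<in> \<rat>" "x < b" "b < x + e" using Rats_dense_in_real[of x "x + e"] e by auto
    have sub: "{a<..<b} \<subseteq> S \<inter> unitI" using e(2) a b by auto
    then have "{a<..<b} \<in> Cfam V" using a b unfolding Cfam_def by auto
    then show "x \<in> \<Union>{C \<in> Cfam V. C \<subseteq> S \<inter> unitI}" using sub a b by auto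
  qed
qed

lemma famB_borel:
  assumes V: "V \<subseteq> unitI" and B: "B \<in> sets borel"
  shows "famB V (\<lambda>_::'c. B \<inter> unitI)"
proof -
  have "B \<in> sigma_sets UNIV {S. open S}" using B sets_borel by blast
  then show ?thesis
  proof (induction rule: sigma_sets.induct)
    case (Basic a)
    then have e: "a \<inter> unitI = \<Union>{C \<in> Cfam V. C \<subseteq> a \<inter> unitI}" using open_cover by blast
    have "famB V (\<lambda>_::'c. \<Union>{C \<in> Cfam V. C \<subseteq> a \<inter> unitI})" by (rule famB_base) blast
    then show ?case by (subst e)
  next
    case Empty
    have "famB V (\<lambda>_::'c. \<Union>{})" by (rule famB_base) blast
    then show ?case by simp
  next
    case (Compl a)
    have "(UNIV - a) \<inter> unitI = unitI - a \<inter> unitI" by blast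
    then show ?case using famB_compl[OF V Compl.IH] by simp
  next
    case (Union a)
    have "(\<Union>i. a i) \<inter> unitI = (\<Union>i. a i \<inter> unitI)" by blast
    then show ?case using famB_union[OF V Union.IH] by simp
  qed
qed

lemma BV_gen: "V \<subseteq> unitI \<Longrightarrow> {B \<inter> unitI | B. B \<in> sets borel} \<union> {V} \<subseteq> Pow unitI"
  by auto

lemma sets_BV: "V \<subseteq> unitI \<Longrightarrow> sets (BV V) = sigma_sets unitI ({B \<inter> unitI | B. B \<in> sets borel} \<union> {V})"
  unfolding BV_def by (rule sets_measure_of[OF BV_gen])

lemma space_BV: "V \<subseteq> unitI \<Longrightarrow> space (BV V) = unitI"
  unfolding BV_def by (rule space_measure_of[OF BV_gen])

lemma famB_BV:
  assumes V: "V \<subseteq> unitI" and A: "A \<in> sets (BV V)"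
  shows "famB V (\<lambda>_::'c. A)"
proof -
  have "A \<in> sigma_sets unitI ({B \<inter> unitI | B. B \<in> sets borel} \<union> {V})" using A sets_BV[OF V] by blast
  then show ?thesis
  proof (induction rule: sigma_sets.induct)
    case (Basic a)
    then show ?case
    proof
      assume "a \<in> {B \<inter> unitI | B. B \<in> sets borel}"
      then show ?thesis using famB_borel[OF V] by auto
    next
      assume "a \<in> {V}"
      moreover have "famB V (\<lambda>_::'c. \<Union>{V})" by (rule famB_base) (auto simp: Cfam_def)
      ultimately show ?thesis by simp
    qed
  next
    case Empty
    have "famB V (\<lambda>_::'c. \<Union>{})" by (rule famB_base) blast
    then show ?case by simp
  next
    case (Compl a)
    then show ?case using famB_compl[OF V Compl.IH] by simp
  next
    case (Union a)
    then show ?case using famB_union[OF V Union.IH] by simp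
  qed
qed

lemma famB_prod:
  assumes V: "V \<subseteq> unitI" and Q: "Q \<in> sets (BV V \<Otimes>\<^sub>M count_space UNIV)"
  shows "famB V (sect (Q :: (real \<times> 'c) set))"
proof -
  have "Q \<in> sigma_sets (unitI \<times> UNIV) {a \<times> b | a b. a \<in> sets (BV V) \<and> b \<in> sets (count_space (UNIV::'c set))}"
    using Q by (simp add: sets_pair_measure space_BV[OF V])
  then show ?thesis
  proof (induction rule: sigma_sets.induct)
    case (Basic q)
    then obtain a b where ab: "q = a \<times> b" "a \<in> sets (BV V)" by blast
    have "sect q = (\<lambda>\<alpha>. if \<alpha> \<in> b then a else \<Union>{})" using ab unfolding sect_def by (auto intro!: ext split: if_splits)
    moreover have "famB V (\<lambda>\<alpha>::'c. if \<alpha> \<in> b then a else \<Union>{})"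
      by (rule famB_if[OF famB_BV[OF V ab(2)] famB_base]) blast
    ultimately show ?case by simp
  next
    case Empty
    have "famB V (\<lambda>_::'c. \<Union>{})" by (rule famB_base) blast
    moreover have "sect ({} :: (real \<times> 'c) set) = (\<lambda>_. \<Union>{})" by (auto simp: sect_def)
    ultimately show ?case by simp
  next
    case (Compl a)
    have "sect (unitI \<times> UNIV - a) = (\<lambda>\<alpha>. unitI - sect a \<alpha>)" by (auto simp: sect_def)
    then show ?case using famB_compl[OF V Compl.IH] by simp
  next
    case (Union a)
    have "sect (\<Union>i. a i) = (\<lambda>\<alpha>. \<Union>i. sect (a i) \<alpha>)" unfolding sect_def by (rule ext) blast
    then show ?case using famB_union[OF V Union.IH] by simp
  qed
qed



lemma Cfam_sets:
  assumes V: "V \<subseteq> unitI" and C: "C \<in> Cfam V"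
  shows "C \<in> sets (BV V)"
proof -
  have "C \<in> sigma_sets unitI ({B \<inter> unitI | B. B \<in> sets borel} \<union> {V})"
    using C unfolding Cfam_def
  proof (elim UnE insertE)
    assume "C = V" then show ?thesis by auto
  next
    assume "C = unitI - V" then show ?thesis by (auto intro: sigma_sets.Compl)
  next
    assume "C \<in> {}" then show ?thesis by simp
  next
    assume "C \<in> {{a<..<b} | a b. a \<in> \<rat> \<and> b \<in> \<rat> \<and> a < b \<and> {a<..<b} \<subseteq> unitI}"
    then obtain a b where "C = {a<..<b}" "{a<..<b} \<subseteq> unitI" by blast
    then have "C = {a<..<b} \<inter> unitI" by blast
    moreover have "{a<..<b} \<in> sets borel" by simp
    ultimately have "C \<in> {B \<inter> unitI | B. B \<in> sets borel}" by blast
    then show ?thesis by (intro sigma_sets.Basic UnI1)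
  qed
  then show ?thesis using sets_BV[OF V] by simp
qed

lemma Cfam_countable: "countable (Cfam V)"
proof -
  have "Cfam V \<subseteq> {V, unitI - V} \<union> (\<lambda>(a,b). {a<..<b}) ` (\<rat> \<times> \<rat>)"
    unfolding Cfam_def by auto
  moreover have "countable ({V, unitI - V} \<union> (\<lambda>(a,b). {a<..<b::real}) ` (\<rat> \<times> \<rat>))"
    using countable_rat by auto
  ultimately show ?thesis using countable_subset by blast
qed

lemma rev_dir:
  fixes r :: "nat rel"
  assumes V: "V \<subseteq> unitI"
  shows "Well_order r \<Longrightarrow> \<forall>A S. (\<forall>\<alpha>\<in>S. \<exists>r'. Well_order r' \<and> Field r' \<noteq> {} \<and> (r', r) \<in> ordLeq \<and> SigV V r' (A \<alpha>))
     \<longrightarrow> {p. snd p \<in> S \<and> fst p \<in> A (snd p)} \<in> sets (BV V \<Otimes>\<^sub>M count_space (UNIV::'c set))"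
proof (induction r rule: wf_induct[OF wf_ordLess])
  case (1 r)
  let ?M = "BV V \<Otimes>\<^sub>M count_space (UNIV::'c set)"
  show ?case
  proof (intro allI impI)
    fix A :: "'c \<Rightarrow> real set" and S
    assume H: "\<forall>\<alpha>\<in>S. \<exists>r'. Well_order r' \<and> Field r' \<noteq> {} \<and> (r', r) \<in> ordLeq \<and> SigV V r' (A \<alpha>)"
    define S1 where "S1 = {\<alpha> \<in> S. \<exists>F. F \<subseteq> Cfam V \<and> A \<alpha> = \<Union>F}"
    define S2 where "S2 = S - S1"
    have split: "{p. snd p \<in> S \<and> fst p \<in> A (snd p)} =
       {p. snd p \<in> S1 \<and> fst p \<in> A (snd p)} \<union> {p. snd p \<in> S2 \<and> fst p \<in> A (snd p)}"
      unfolding S2_def S1_def by auto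
    define F where "F \<alpha> = (SOME F. F \<subseteq> Cfam V \<and> A \<alpha> = \<Union>F)" for \<alpha>
    have F: "F \<alpha> \<subseteq> Cfam V \<and> A \<alpha> = \<Union>(F \<alpha>)" if "\<alpha> \<in> S1" for \<alpha>
    proof -
      have "\<exists>F. F \<subseteq> Cfam V \<and> A \<alpha> = \<Union>F" using that unfolding S1_def by blast
      then show ?thesis unfolding F_def by (rule someI_ex)
    qed
    have P1: "{p. snd p \<in> S1 \<and> fst p \<in> A (snd p)} = (\<Union>C\<in>Cfam V. C \<times> {\<alpha> \<in> S1. C \<in> F \<alpha>})"
    proof (intro set_eqI iffI)
      fix p assume "p \<in> {p. snd p \<in> S1 \<and> fst p \<in> A (snd p)}"
      then show "p \<in> (\<Union>C\<in>Cfam V. C \<times> {\<alpha> \<in> S1. C \<in> F \<alpha>})" using F[of "snd p"]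
        by (cases p) auto
    next
      fix p assume "p \<in> (\<Union>C\<in>Cfam V. C \<times> {\<alpha> \<in> S1. C \<in> F \<alpha>})"
      then show "p \<in> {p. snd p \<in> S1 \<and> fst p \<in> A (snd p)}" using F[of "snd p"]
        by (cases p) auto
    qed
    have M1: "{p. snd p \<in> S1 \<and> fst p \<in> A (snd p)} \<in> sets ?M"
      unfolding P1 using Cfam_countable Cfam_sets[OF V]
      by (intro sets.countable_UN'') auto
    have step2: "\<exists>rs Bs. (\<forall>n::nat. Well_order (rs n) \<and> Field (rs n) \<noteq> {} \<and> (rs n, r) \<in> ordLess \<and> SigV V (rs n) (Bs n))
        \<and> A \<alpha> = (\<Union>n. unitI - Bs n)" if "\<alpha> \<in> S2" for \<alpha>
    proof -
      have "\<alpha> \<in> S" using that unfolding S2_def by simp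
      then obtain r' where r': "Well_order r'" "Field r' \<noteq> {}" "(r', r) \<in> ordLeq" "SigV V r' (A \<alpha>)"
        using H by blast
      have nb: "\<not> (\<exists>F. F \<subseteq> Cfam V \<and> A \<alpha> = \<Union>F)" using that unfolding S2_def S1_def by blast
      from r'(4) have cs: "(\<exists>F. A \<alpha> = \<Union>F \<and> F \<subseteq> Cfam V) \<or> (\<exists>rs As. A \<alpha> = (\<Union>n::nat. As n) \<and>
          (\<forall>n. Well_order (rs n) \<and> Field (rs n) \<noteq> {} \<and> (rs n, r') \<in> ordLess \<and> (\<exists>B. SigV V (rs n) B \<and> As n = unitI - B)))"
        by (cases rule: SigV.cases) blast+
      have "\<not> (\<exists>F. A \<alpha> = \<Union>F \<and> F \<subseteq> Cfam V)" using nb by blast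
      with cs obtain rs As where st: "A \<alpha> = (\<Union>n::nat. As n)"
         "\<forall>n. Well_order (rs n) \<and> Field (rs n) \<noteq> {} \<and> (rs n, r') \<in> ordLess \<and> (\<exists>B. SigV V (rs n) B \<and> As n = unitI - B)"
        by blast
      have "\<forall>n. \<exists>B. SigV V (rs n) B \<and> As n = unitI - B" using st(2) by blast
      then obtain Bs where Bs: "\<forall>n. SigV V (rs n) (Bs n) \<and> As n = unitI - Bs n" by (rule choice[THEN exE]) 
      have "\<forall>n. Well_order (rs n) \<and> Field (rs n) \<noteq> {} \<and> (rs n, r) \<in> ordLess \<and> SigV V (rs n) (Bs n)"
      proof
        fix n show "Well_order (rs n) \<and> Field (rs n) \<noteq> {} \<and> (rs n, r) \<in> ordLess \<and> SigV V (rs n) (Bs n)"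
          using st(2)[rule_format, of n] Bs r'(3) ordLess_ordLeq_trans by blast
      qed
      moreover have "A \<alpha> = (\<Union>n. unitI - Bs n)" using st(1) Bs by simp
      ultimately show ?thesis by blast
    qed
    define rs where "rs \<alpha> = (SOME rs. \<exists>Bs. (\<forall>n::nat. Well_order (rs n) \<and> Field (rs n) \<noteq> {} \<and> (rs n, r) \<in> ordLess \<and> SigV V (rs n) (Bs n))
        \<and> A \<alpha> = (\<Union>n. unitI - Bs n))" for \<alpha>
    define Bs where "Bs \<alpha> = (SOME Bs. (\<forall>n::nat. Well_order (rs \<alpha> n) \<and> Field (rs \<alpha> n) \<noteq> {} \<and> (rs \<alpha> n, r) \<in> ordLess \<and> SigV V (rs \<alpha> n) (Bs n))
        \<and> A \<alpha> = (\<Union>n. unitI - Bs n))" for \<alpha>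
    have RB: "(\<forall>n::nat. Well_order (rs \<alpha> n) \<and> Field (rs \<alpha> n) \<noteq> {} \<and> (rs \<alpha> n, r) \<in> ordLess \<and> SigV V (rs \<alpha> n) (Bs \<alpha> n))
        \<and> A \<alpha> = (\<Union>n. unitI - Bs \<alpha> n)" if "\<alpha> \<in> S2" for \<alpha>
    proof -
      have "\<exists>Bs. (\<forall>n::nat. Well_order (rs \<alpha> n) \<and> Field (rs \<alpha> n) \<noteq> {} \<and> (rs \<alpha> n, r) \<in> ordLess \<and> SigV V (rs \<alpha> n) (Bs n))
        \<and> A \<alpha> = (\<Union>n. unitI - Bs n)"
        unfolding rs_def using someI_ex[OF step2[OF that]] .
      then show ?thesis unfolding Bs_def by (rule someI_ex)
    qed
    have wr: "Well_order r" using 1(2) .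
    define a where "a \<alpha> n = (SOME a. a \<in> Field r \<and> (rs \<alpha> n, Restr r (underS r a)) \<in> ordIso)" for \<alpha> n
    have aP: "a \<alpha> n \<in> Field r \<and> (rs \<alpha> n, Restr r (underS r (a \<alpha> n))) \<in> ordIso" if "\<alpha> \<in> S2" for \<alpha> n
    proof -
      have "(rs \<alpha> n, r) \<in> ordLess" "Well_order (rs \<alpha> n)" using RB[OF that] by auto
      then have "\<exists>a \<in> Field r. (rs \<alpha> n, Restr r (underS r a)) \<in> ordIso"
        using ordLess_iff_ordIso_Restr[OF wr] by blast
      then have "\<exists>a. a \<in> Field r \<and> (rs \<alpha> n, Restr r (underS r a)) \<in> ordIso" by blast
      then show ?thesis unfolding a_def by (rule someI_ex)
    qed
    define T where "T n b = {\<alpha> \<in> S2. a \<alpha> n = b}" for n b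
    define X where "X n b = {p. snd p \<in> T n b \<and> fst p \<in> Bs (snd p) n}" for n b
    have XM: "X n b \<in> sets ?M" if b: "b \<in> Field r" for n b
    proof -
      let ?\<rho> = "Restr r (underS r b)"
      have FR: "Field r \<noteq> {}" using b by blast
      have less: "(?\<rho>, r) \<in> ordLess" using underS_Restr_ordLess[OF wr FR] by simp
      have wo\<rho>: "Well_order ?\<rho>" using wr Well_order_Restr by blast
      have IH: "\<forall>A S. (\<forall>\<alpha>\<in>S. \<exists>r'. Well_order r' \<and> Field r' \<noteq> {} \<and> (r', ?\<rho>) \<in> ordLeq \<and> SigV V r' (A \<alpha>))
         \<longrightarrow> {p. snd p \<in> S \<and> fst p \<in> A (snd p)} \<in> sets ?M"
        using mp[OF mp[OF spec[OF 1(1), of ?\<rho>] less] wo\<rho>] .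
      have "\<forall>\<alpha>\<in>T n b. \<exists>r'. Well_order r' \<and> Field r' \<noteq> {} \<and> (r', ?\<rho>) \<in> ordLeq \<and> SigV V r' (Bs \<alpha> n)"
      proof
        fix \<alpha> assume "\<alpha> \<in> T n b"
        then have \<alpha>: "\<alpha> \<in> S2" "a \<alpha> n = b" unfolding T_def by auto
        show "\<exists>r'. Well_order r' \<and> Field r' \<noteq> {} \<and> (r', ?\<rho>) \<in> ordLeq \<and> SigV V r' (Bs \<alpha> n)"
        proof (intro exI conjI)
          show "Well_order (rs \<alpha> n)" "Field (rs \<alpha> n) \<noteq> {}" "SigV V (rs \<alpha> n) (Bs \<alpha> n)"
            using RB[OF \<alpha>(1)] by auto
          show "(rs \<alpha> n, ?\<rho>) \<in> ordLeq" using aP[OF \<alpha>(1), of n] \<alpha>(2) ordIso_imp_ordLeq by auto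
        qed
      qed
      then show ?thesis unfolding X_def by (rule mp[OF spec[OF spec[OF IH, of "\<lambda>\<alpha>. Bs \<alpha> n"], of "T n b"]])
    qed
    have uM: "unitI \<in> sets (BV V)" using sets.top[of "BV V"] space_BV[OF V] by simp
    have P2: "{p. snd p \<in> S2 \<and> fst p \<in> A (snd p)} = (\<Union>n. \<Union>b\<in>Field r. (unitI \<times> T n b) - X n b)"
    proof (intro set_eqI iffI)
      fix p assume p: "p \<in> {p. snd p \<in> S2 \<and> fst p \<in> A (snd p)}"
      then have "fst p \<in> (\<Union>n. unitI - Bs (snd p) n)" using RB[of "snd p"] by auto
      then obtain n where n: "fst p \<in> unitI" "fst p \<notin> Bs (snd p) n" by blast
      have "a (snd p) n \<in> Field r" using aP[of "snd p" n] p by auto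
      moreover have "p \<in> (unitI \<times> T n (a (snd p) n)) - X n (a (snd p) n)"
        using n p unfolding T_def X_def by (cases p) auto
      ultimately show "p \<in> (\<Union>n. \<Union>b\<in>Field r. (unitI \<times> T n b) - X n b)" by blast
    next
      fix p assume "p \<in> (\<Union>n. \<Union>b\<in>Field r. (unitI \<times> T n b) - X n b)"
      then obtain n b where "p \<in> (unitI \<times> T n b) - X n b" by blast
      then have "snd p \<in> S2" "fst p \<in> unitI - Bs (snd p) n" unfolding T_def X_def by auto
      then show "p \<in> {p. snd p \<in> S2 \<and> fst p \<in> A (snd p)}" using RB[of "snd p"] by auto
    qed
    have M2: "{p. snd p \<in> S2 \<and> fst p \<in> A (snd p)} \<in> sets ?M"
    proof -
      have cF: "countable (Field r)" by simp
      have "(\<Union>b\<in>Field r. (unitI \<times> T n b) - X n b) \<in> sets ?M" for n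
      proof (rule sets.countable_UN''[OF cF])
        fix b assume b: "b \<in> Field r"
        have "unitI \<times> T n b \<in> sets ?M" using uM by (intro pair_measureI) auto
        then show "(unitI \<times> T n b) - X n b \<in> sets ?M" using XM[OF b] by (rule sets.Diff)
      qed
      then show ?thesis unfolding P2 by blast
    qed
    show "{p. snd p \<in> S \<and> fst p \<in> A (snd p)} \<in> sets ?M"
      unfolding split using M1 M2 by blast
  qed
qed


theorem lemma5p1:
  fixes V :: "real set" and Q :: "(real \<times> 'b::wellorder) set"
  assumes "V \<subseteq> unitI" and "V \<notin> sets lebesgue"
    and "Q \<subseteq> unitI \<times> UNIV"
  shows "Q \<in> sets (BV V \<Otimes>\<^sub>M count_space UNIV) \<longleftrightarrow>
         ((\<forall>\<alpha>. in_some_SigV V (sect Q \<alpha>)) \<and> comp_lt_omega1 V Q)"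
proof
  assume Q: "Q \<in> sets (BV V \<Otimes>\<^sub>M count_space UNIV)"
  have "famB V (sect Q)" by (rule famB_prod[OF assms(1) Q])
  then obtain \<eta> :: "nat rel" where \<eta>: "Well_order \<eta>" "Field \<eta> \<noteq> {}"
    "\<forall>\<alpha>. \<exists>r. Well_order r \<and> Field r \<noteq> {} \<and> (r, \<eta>) \<in> ordLeq \<and> SigV V r (sect Q \<alpha>)"
    unfolding famB_def by blast
  have "\<forall>\<alpha>. in_some_SigV V (sect Q \<alpha>)"
  proof
    fix \<alpha>
    obtain r where "Well_order r" "Field r \<noteq> {}" "SigV V r (sect Q \<alpha>)" using \<eta>(3) by blast
    then show "in_some_SigV V (sect Q \<alpha>)" unfolding in_some_SigV_def by blast
  qed
  moreover have "comp_lt_omega1 V Q" unfolding comp_lt_omega1_def using \<eta> by blast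
  ultimately show "(\<forall>\<alpha>. in_some_SigV V (sect Q \<alpha>)) \<and> comp_lt_omega1 V Q" by blast
next
  assume "(\<forall>\<alpha>. in_some_SigV V (sect Q \<alpha>)) \<and> comp_lt_omega1 V Q"
  then obtain \<eta> :: "nat rel" where \<eta>: "Well_order \<eta>"
    "\<forall>\<alpha>. \<exists>r. Well_order r \<and> Field r \<noteq> {} \<and> (r, \<eta>) \<in> ordLeq \<and> SigV V r (sect Q \<alpha>)"
    unfolding comp_lt_omega1_def by blast
  have H: "\<forall>\<alpha>\<in>UNIV. \<exists>r. Well_order r \<and> Field r \<noteq> {} \<and> (r, \<eta>) \<in> ordLeq \<and> SigV V r (sect Q \<alpha>)"
    using \<eta>(2) by simp
  have "{p. snd p \<in> (UNIV::'b set) \<and> fst p \<in> sect Q (snd p)} \<in> sets (BV V \<Otimes>\<^sub>M count_space (UNIV::'b set))"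
    using mp[OF spec[OF spec[OF rev_dir[OF assms(1) \<eta>(1)], of "sect Q"], of UNIV] H] .
  moreover have "{p. snd p \<in> (UNIV::'b set) \<and> fst p \<in> sect Q (snd p)} = Q" unfolding sect_def by auto
  ultimately show "Q \<in> sets (BV V \<Otimes>\<^sub>M count_space UNIV)" by simp
qed

end
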